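(* There exists a sequence $(x_n)$ of positive reals with $\sum x_n<\infty$ such that the achievement set $E(x_n)$ is a Cantor set of Hausdorff dimension $0$ and the algebraic sum $E(x_n)+E(x_n)$ is also a Cantor set.
   Context: For a real sequence $(x_n)$, the achievement set is $E(x_n)=\{y\in\mathbb R:\exists A\subset\mathbb N,\ y=\sum_{n\in A}x_n\}$. A Cantor set is a set homeomorphic to the classical ternary Cantor set. For sets $A,B\subset\mathbb R$, $A+B=\{a+b:a\in A,b\in B\}$. *)

theory Defs
  imports "HOL-Analysis.Analysis"
begin

definition achievement_set :: "(nat \<Rightarrow> real) \<Rightarrow> real set" where
  "achievement_set x = {y. \<exists>A::nat set. y = (\<Sum>n. if n \<in> A then x n else 0)}"

definition ternary_cantor_set :: "real set" where
  "ternary_cantor_set = {y. \<exists>d::nat \<Rightarrow> nat. (\<forall>n. d n \<in> {0, 2}) \<and>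
                              y = (\<Sum>n. real (d n) / 3 ^ (Suc n))}"

definition is_cantor_set :: "real set \<Rightarrow> bool" where
  "is_cantor_set S \<longleftrightarrow> S homeomorphic ternary_cantor_set"

definition set_sum :: "real set \<Rightarrow> real set \<Rightarrow> real set" where
  "set_sum A B = {a + b | a b. a \<in> A \<and> b \<in> B}"

definition hausdorff_pre :: "real \<Rightarrow> real \<Rightarrow> real set \<Rightarrow> ennreal" where
  "hausdorff_pre s \<delta> A =
     (INF U \<in> {U :: nat \<Rightarrow> real set. A \<subseteq> (\<Union>i. U i) \<and> (\<forall>i. diameter (U i) \<le> \<delta>)}.
        (\<Sum>i. ennreal (diameter (U i) powr s)))"

definition hausdorff_measure :: "real \<Rightarrow> real set \<Rightarrow> ennreal" where
  "hausdorff_measure s A = (SUP \<delta> \<in> {0<..}. hausdorff_pre s \<delta> A)"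

definition hausdorff_dim :: "real set \<Rightarrow> ereal" where
  "hausdorff_dim A = (INF s \<in> {s::real. 0 \<le> s \<and> hausdorff_measure s A = 0}. ereal s)"

end

theory Submission
  imports Defs "HOL-Library.Nat_Bijection" "HOL-Real_Asymp.Real_Asymp"
begin


definition bnd :: "nat \<Rightarrow> (nat \<Rightarrow> nat) \<Rightarrow> bool" where
  "bnd M d \<longleftrightarrow> (\<forall>n. d n \<le> M)"

definition val :: "(nat \<Rightarrow> real) \<Rightarrow> (nat \<Rightarrow> nat) \<Rightarrow> real" where
  "val w d = (\<Sum>n. real (d n) * w n)"

definition tail :: "(nat \<Rightarrow> real) \<Rightarrow> nat \<Rightarrow> real" where
  "tail w n = (\<Sum>k. w (k + n))"

definition DS :: "(nat \<Rightarrow> real) \<Rightarrow> nat \<Rightarrow> real set" where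
  "DS w M = {val w d | d. bnd M d}"

definition sep :: "(nat \<Rightarrow> real) \<Rightarrow> nat \<Rightarrow> bool" where
  "sep w M \<longleftrightarrow> (\<forall>n. w n > 0) \<and> summable w \<and> (\<forall>n. real M * tail w (Suc n) < w n)"

lemma summable_digits:
  assumes "\<forall>n. w n > 0" "summable w" "bnd M d"
  shows "summable (\<lambda>n. real (d n) * w n)"
proof (rule summable_comparison_test'[where g="\<lambda>n. real M * w n"])
  show "summable (\<lambda>n. real M * w n)" using assms(2) by (rule summable_mult)
  fix n
  have "real (d n) \<le> real M" using assms(3) by (simp add: bnd_def)
  then show "norm (real (d n) * w n) \<le> real M * w n"
    using assms(1) by (simp add: abs_mult mult_right_mono less_imp_le)
qed

lemma tail_nonneg: assumes "\<forall>n. w n > 0" "summable w" shows "0 \<le> tail w n"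
  unfolding tail_def using assms
  by (intro suminf_nonneg) (auto intro: less_imp_le summable_ignore_initial_segment)

lemma split_diff:
  assumes "\<forall>n. w n > 0" "summable w" "bnd M d" "bnd M d'"
  shows "val w d - val w d' = (\<Sum>k<n. (real (d k) - real (d' k)) * w k)
           + (\<Sum>k. (real (d (k+n)) - real (d' (k+n))) * w (k+n))"
proof -
  let ?D = "\<lambda>k. (real (d k) - real (d' k)) * w k"
  have s: "summable ?D"
    using summable_diff[OF summable_digits[OF assms(1,2,3)] summable_digits[OF assms(1,2,4)]]
    by (simp add: left_diff_distrib)
  have "val w d - val w d' = suminf ?D"
    unfolding val_def
    using suminf_diff[OF summable_digits[OF assms(1,2,3)] summable_digits[OF assms(1,2,4)]]
    by (simp add: left_diff_distrib)
  also have "\<dots> = (\<Sum>k. ?D (k+n)) + (\<Sum>k<n. ?D k)"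
    using suminf_split_initial_segment[OF s] by simp
  finally show ?thesis by simp
qed

lemma tail_bound:
  assumes "\<forall>n. w n > 0" "summable w" "bnd M d" "bnd M d'"
  shows "\<bar>\<Sum>k. (real (d (k+n)) - real (d' (k+n))) * w (k+n)\<bar> \<le> real M * tail w n"
proof -
  let ?D = "\<lambda>k. (real (d (k+n)) - real (d' (k+n))) * w (k+n)"
  have sw: "summable (\<lambda>k. w (k+n))" using assms(2) by (rule summable_ignore_initial_segment)
  have b: "norm (?D k) \<le> real M * w (k+n)" for k
  proof -
    have "d (k+n) \<le> M" "d' (k+n) \<le> M" using assms(3,4) unfolding bnd_def by auto
    then have "\<bar>real (d (k+n)) - real (d' (k+n))\<bar> \<le> real M" by linarith
    then show ?thesis using assms(1) by (simp add: abs_mult less_imp_le mult_right_mono)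
  qed
  have "summable (\<lambda>k. real M * w (k+n))" using sw by (rule summable_mult)
  then have "norm (suminf ?D) \<le> (\<Sum>k. real M * w (k+n))"
    using b by (intro norm_suminf_le) auto
  also have "\<dots> = real M * tail w n" unfolding tail_def using sw by (simp add: suminf_mult)
  finally show ?thesis by simp
qed

lemma agree_bound:
  assumes "\<forall>n. w n > 0" "summable w" "bnd M d" "bnd M d'" "\<forall>k<N. d k = d' k"
  shows "\<bar>val w d - val w d'\<bar> \<le> real M * tail w N"
  using split_diff[OF assms(1-4), of N] tail_bound[OF assms(1-4), of N] assms(5) by simp

lemma first_diff:
  assumes "\<forall>n. w n > 0" "summable w" "bnd M d" "bnd M d'" "\<forall>k<n. d k = d' k" "d n \<noteq> d' n"
  shows "w n - real M * tail w (Suc n) \<le> \<bar>val w d - val w d'\<bar>"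
proof -
  have e: "val w d - val w d' = (real (d n) - real (d' n)) * w n
           + (\<Sum>k. (real (d (k+Suc n)) - real (d' (k+Suc n))) * w (k+Suc n))"
    using split_diff[OF assms(1-4), of "Suc n"] assms(5) by simp
  have "1 \<le> \<bar>real (d n) - real (d' n)\<bar>" using assms(6) by linarith
  then have "1 * w n \<le> \<bar>real (d n) - real (d' n)\<bar> * w n"
    using assms(1) by (intro mult_right_mono) (auto simp: less_imp_le)
  moreover have "\<bar>w n\<bar> = w n" using assms(1) by (simp add: less_imp_le)
  ultimately have "w n \<le> \<bar>(real (d n) - real (d' n)) * w n\<bar>"
    by (simp add: abs_mult)
  then show ?thesis using e tail_bound[OF assms(1-4), of "Suc n"] by linarith
qed

lemma sep_gap: "sep w M \<Longrightarrow> 0 < w n - real M * tail w (Suc n)"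
  unfolding sep_def by auto

lemma val_inj:
  assumes "sep w M" "bnd M d" "bnd M d'" "val w d = val w d'"
  shows "d = d'"
proof (rule ccontr)
  assume "d \<noteq> d'"
  then have "\<exists>n. d n \<noteq> d' n" by auto
  then obtain n where n: "d n \<noteq> d' n" "\<forall>k<n. d k = d' k"
    using exists_least_iff[of "\<lambda>n. d n \<noteq> d' n"] by blast
  have wp: "\<forall>n. w n > 0" "summable w" using assms(1) unfolding sep_def by auto
  from first_diff[OF wp assms(2,3) n(2,1)] sep_gap[OF assms(1), of n] assms(4)
  show False by auto
qed

lemma sep_delta:
  assumes "sep w M"
  shows "\<exists>\<delta>>0. \<forall>d d'. bnd M d \<longrightarrow> bnd M d' \<longrightarrow> \<bar>val w d - val w d'\<bar> < \<delta> \<longrightarrow> (\<forall>k<K. d k = d' k)"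
proof -
  have "\<exists>\<delta>>0. \<forall>n<K. \<delta> \<le> w n - real M * tail w (Suc n)"
  proof (induction K)
    case 0
    then show ?case by (auto intro: exI[of _ 1])
  next
    case (Suc K)
    then obtain \<delta> where "\<delta>>0" "\<forall>n<K. \<delta> \<le> w n - real M * tail w (Suc n)" by auto
    then show ?case using sep_gap[OF assms, of K]
      by (intro exI[of _ "min \<delta> (w K - real M * tail w (Suc K))"]) (auto simp: less_Suc_eq)
  qed
  then obtain \<delta> where \<delta>: "\<delta>>0" "\<forall>n<K. \<delta> \<le> w n - real M * tail w (Suc n)" by auto
  have "\<forall>k<K. d k = d' k" if "bnd M d" "bnd M d'" "\<bar>val w d - val w d'\<bar> < \<delta>" for d d'
  proof (rule ccontr)
    assume "\<not> (\<forall>k<K. d k = d' k)"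
    then have "\<exists>n. n < K \<and> d n \<noteq> d' n" by auto
    then obtain n where n: "n < K \<and> d n \<noteq> d' n" "\<forall>k<n. \<not>(k < K \<and> d k \<noteq> d' k)"
      using exists_least_iff[of "\<lambda>n. n < K \<and> d n \<noteq> d' n"] by blast
    then have a: "\<forall>k<n. d k = d' k" by auto
    have wp: "\<forall>n. w n > 0" "summable w" using assms(1) unfolding sep_def by auto
    have "\<delta> \<le> w n - real M * tail w (Suc n)" using \<delta>(2) n(1) by auto
    moreover have "w n - real M * tail w (Suc n) \<le> \<bar>val w d - val w d'\<bar>"
      using first_diff[OF wp that(1,2) a] n(1) by auto
    ultimately show False using that(3) by linarith
  qed
  then show ?thesis using \<delta>(1) by blast
qed

definition dig :: "(nat \<Rightarrow> real) \<Rightarrow> nat \<Rightarrow> real \<Rightarrow> (nat \<Rightarrow> nat)" where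
  "dig w M y = (SOME d. bnd M d \<and> y = val w d)"

lemma dig:
  assumes "y \<in> DS w M" shows "bnd M (dig w M y)" "val w (dig w M y) = y"
proof -
  have "\<exists>d. bnd M d \<and> y = val w d" using assms unfolding DS_def by auto
  then have "bnd M (dig w M y) \<and> y = val w (dig w M y)" unfolding dig_def by (rule someI_ex)
  then show "bnd M (dig w M y)" "val w (dig w M y) = y" by auto
qed

lemma dig_val: assumes "sep w M" "bnd M d" shows "dig w M (val w d) = d"
proof -
  have "val w d \<in> DS w M" using assms(2) unfolding DS_def by auto
  from dig[OF this] show ?thesis using val_inj[OF assms(1) _ assms(2)] by metis
qed

lemma cont_map:
  assumes sw: "sep w M1" and sv: "sep v M2"
    and pres: "\<And>d. bnd M1 d \<Longrightarrow> bnd M2 (\<Phi> d)"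
    and cont: "\<And>N. \<exists>K. \<forall>d d'. bnd M1 d \<longrightarrow> bnd M1 d' \<longrightarrow> (\<forall>k<K. d k = d' k) \<longrightarrow> (\<forall>k<N. \<Phi> d k = \<Phi> d' k)"
  shows "continuous_on (DS w M1) (\<lambda>y. val v (\<Phi> (dig w M1 y)))"
  unfolding continuous_on_iff
proof (intro ballI allI impI)
  fix y e :: real assume y: "y \<in> DS w M1" and e: "0 < e"
  have vp: "\<forall>n. v n > 0" "summable v" using sv unfolding sep_def by auto
  have wp: "\<forall>n. w n > 0" "summable w" using sw unfolding sep_def by auto
  obtain N where N: "\<forall>n\<ge>N. norm (\<Sum>i. v (i + n)) < e / (real M2 + 1)"
    using suminf_exist_split[of "e / (real M2 + 1)" v] e vp by auto
  have tailN: "tail v N < e / (real M2 + 1)" using N unfolding tail_def by auto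
  have "real M2 * tail v N \<le> (real M2 + 1) * tail v N" using tail_nonneg[OF vp] by (simp add: algebra_simps)
  also have "\<dots> < e" using tailN by (simp add: field_simps)
  finally have Ne: "real M2 * tail v N < e" .
  obtain K where K: "\<forall>d d'. bnd M1 d \<longrightarrow> bnd M1 d' \<longrightarrow> (\<forall>k<K. d k = d' k) \<longrightarrow> (\<forall>k<N. \<Phi> d k = \<Phi> d' k)"
    using cont by blast
  obtain \<delta> where \<delta>: "\<delta>>0" "\<forall>d d'. bnd M1 d \<longrightarrow> bnd M1 d' \<longrightarrow> \<bar>val w d - val w d'\<bar> < \<delta> \<longrightarrow> (\<forall>k<K. d k = d' k)"
    using sep_delta[OF sw, of K] by auto
  show "\<exists>d>0. \<forall>x'\<in>DS w M1. dist x' y < d \<longrightarrow> dist (val v (\<Phi> (dig w M1 x'))) (val v (\<Phi> (dig w M1 y))) < e"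
  proof (intro exI[of _ \<delta>] conjI ballI impI)
    fix y' assume y': "y' \<in> DS w M1" "dist y' y < \<delta>"
    have "\<forall>k<K. dig w M1 y' k = dig w M1 y k"
      using \<delta>(2) dig[OF y] dig[OF y'(1)] y'(2) by (simp add: dist_real_def)
    then have "\<forall>k<N. \<Phi> (dig w M1 y') k = \<Phi> (dig w M1 y) k"
      using K dig[OF y] dig[OF y'(1)] by blast
    then have "\<bar>val v (\<Phi> (dig w M1 y')) - val v (\<Phi> (dig w M1 y))\<bar> \<le> real M2 * tail v N"
      using agree_bound[OF vp pres pres] dig[OF y] dig[OF y'(1)] by blast
    then show "dist (val v (\<Phi> (dig w M1 y'))) (val v (\<Phi> (dig w M1 y))) < e"
      using Ne by (simp add: dist_real_def)
  qed (use \<delta> in simp)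
qed

lemma DS_homeomorphic:
  assumes sw: "sep w M1" and sv: "sep v M2"
    and presP: "\<And>d. bnd M1 d \<Longrightarrow> bnd M2 (\<Phi> d)"
    and presQ: "\<And>d. bnd M2 d \<Longrightarrow> bnd M1 (\<Psi> d)"
    and PQ: "\<And>d. bnd M1 d \<Longrightarrow> \<Psi> (\<Phi> d) = d"
    and QP: "\<And>d. bnd M2 d \<Longrightarrow> \<Phi> (\<Psi> d) = d"
    and contP: "\<And>N. \<exists>K. \<forall>d d'. bnd M1 d \<longrightarrow> bnd M1 d' \<longrightarrow> (\<forall>k<K. d k = d' k) \<longrightarrow> (\<forall>k<N. \<Phi> d k = \<Phi> d' k)"
    and contQ: "\<And>N. \<exists>K. \<forall>d d'. bnd M2 d \<longrightarrow> bnd M2 d' \<longrightarrow> (\<forall>k<K. d k = d' k) \<longrightarrow> (\<forall>k<N. \<Psi> d k = \<Psi> d' k)"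
  shows "DS w M1 homeomorphic DS v M2"
  unfolding homeomorphic_def
proof (intro exI)
  let ?f = "\<lambda>y. val v (\<Phi> (dig w M1 y))"
  let ?g = "\<lambda>z. val w (\<Psi> (dig v M2 z))"
  have gf: "?g (?f y) = y" if "y \<in> DS w M1" for y
  proof -
    have "dig v M2 (?f y) = \<Phi> (dig w M1 y)" using dig(1)[OF that] presP dig_val[OF sv] by blast
    then show ?thesis using PQ dig[OF that] by simp
  qed
  have fg: "?f (?g z) = z" if "z \<in> DS v M2" for z
  proof -
    have "dig w M1 (?g z) = \<Psi> (dig v M2 z)" using dig(1)[OF that] presQ dig_val[OF sw] by blast
    then show ?thesis using QP dig[OF that] by simp
  qed
  have fS: "?f y \<in> DS v M2" if "y \<in> DS w M1" for y
    using dig[OF that] presP unfolding DS_def by blast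
  have gT: "?g z \<in> DS w M1" if "z \<in> DS v M2" for z
    using dig[OF that] presQ unfolding DS_def by blast
  show "homeomorphism (DS w M1) (DS v M2) ?f ?g"
    unfolding homeomorphism_def
  proof (intro conjI ballI)
    show "?f ` DS w M1 = DS v M2"
    proof
      show "?f ` DS w M1 \<subseteq> DS v M2" using fS by blast
      show "DS v M2 \<subseteq> ?f ` DS w M1"
      proof
        fix z assume "z \<in> DS v M2"
        then show "z \<in> ?f ` DS w M1" using fg[of z] gT[of z] by (metis image_eqI)
      qed
    qed
    show "?g ` DS v M2 = DS w M1"
    proof
      show "?g ` DS v M2 \<subseteq> DS w M1" using gT by blast
      show "DS w M1 \<subseteq> ?g ` DS v M2"
      proof
        fix z assume "z \<in> DS w M1"
        then show "z \<in> ?g ` DS v M2" using gf[of z] fS[of z] by (metis image_eqI)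
      qed
    qed
    show "continuous_on (DS w M1) ?f" by (rule cont_map[OF sw sv presP contP])
    show "continuous_on (DS v M2) ?g" by (rule cont_map[OF sv sw presQ contQ])
  qed (use gf fg in auto)
qed



primrec ppos :: "(nat \<Rightarrow> nat) \<Rightarrow> nat \<Rightarrow> nat" where
  "ppos b 0 = 0"
| "ppos b (Suc i) = ppos b i + (if b (ppos b i) = 0 then 1 else 2)"

definition parse :: "(nat \<Rightarrow> nat) \<Rightarrow> nat \<Rightarrow> nat" where
  "parse b i = (if b (ppos b i) = 0 then 0 else if b (Suc (ppos b i)) = 0 then 1 else 2)"

primrec est :: "(nat \<Rightarrow> nat) \<Rightarrow> nat \<Rightarrow> nat \<times> nat" where
  "est c 0 = (0, 0)"
| "est c (Suc m) = (if c (fst (est c m)) = 0 \<or> snd (est c m) = 1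
                    then (Suc (fst (est c m)), 0) else (fst (est c m), 1))"

definition enc :: "(nat \<Rightarrow> nat) \<Rightarrow> nat \<Rightarrow> nat" where
  "enc c m = (if snd (est c m) = 0 then (if c (fst (est c m)) = 0 then 0 else 1)
              else (if c (fst (est c m)) = 1 then 0 else 1))"

lemma parse_bnd: "bnd 2 (parse b)"
  unfolding bnd_def parse_def by auto

lemma enc_bnd: "bnd 1 (enc c)"
  unfolding bnd_def enc_def by auto

lemma ppos_cover:
  "\<exists>i. ppos b i = m \<or> (Suc (ppos b i) = m \<and> b (ppos b i) \<noteq> 0)"
proof (induction m)
  case 0
  then show ?case by (auto intro: exI[of _ 0])
next
  case (Suc m)
  then obtain i where i: "ppos b i = m \<or> (Suc (ppos b i) = m \<and> b (ppos b i) \<noteq> 0)" by auto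
  then show ?case
  proof
    assume h: "ppos b i = m"
    show ?case
    proof (cases "b (ppos b i) = 0")
      case True
      then show ?thesis using h by (intro exI[of _ "Suc i"]) auto
    next
      case False
      then show ?thesis using h by (intro exI[of _ i]) auto
    qed
  next
    assume h: "Suc (ppos b i) = m \<and> b (ppos b i) \<noteq> 0"
    then show ?case by (intro exI[of _ "Suc i"]) auto
  qed
qed

lemma est_parse:
  "est (parse b) (ppos b i) = (i, 0) \<and>
   (b (ppos b i) \<noteq> 0 \<longrightarrow> est (parse b) (Suc (ppos b i)) = (i, 1))"
proof (induction i)
  case 0
  then show ?case by (auto simp: parse_def)
next
  case (Suc i)
  show ?case
  proof (cases "b (ppos b i) = 0")
    case True
    then have p: "ppos b (Suc i) = Suc (ppos b i)" by simp
    have "parse b i = 0" using True by (simp add: parse_def)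
    then have e: "est (parse b) (ppos b (Suc i)) = (Suc i, 0)" using Suc.IH p by simp
    show ?thesis
    proof (intro conjI impI)
      show "est (parse b) (ppos b (Suc i)) = (Suc i, 0)" by (rule e)
      assume "b (ppos b (Suc i)) \<noteq> 0"
      then have "parse b (Suc i) \<noteq> 0" by (simp add: parse_def)
      then show "est (parse b) (Suc (ppos b (Suc i))) = (Suc i, 1)" using e by simp
    qed
  next
    case False
    then have p: "ppos b (Suc i) = Suc (Suc (ppos b i))" by simp
    have e1: "est (parse b) (Suc (ppos b i)) = (i, 1)" using Suc.IH False by blast
    then have e: "est (parse b) (ppos b (Suc i)) = (Suc i, 0)" using p by simp
    show ?thesis
    proof (intro conjI impI)
      show "est (parse b) (ppos b (Suc i)) = (Suc i, 0)" by (rule e)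
      assume "b (ppos b (Suc i)) \<noteq> 0"
      then have "parse b (Suc i) \<noteq> 0" by (simp add: parse_def)
      then show "est (parse b) (Suc (ppos b (Suc i))) = (Suc i, 1)" using e by simp
    qed
  qed
qed

lemma enc_parse: assumes "bnd 1 b" shows "enc (parse b) = b"
proof
  fix m
  obtain i where i: "ppos b i = m \<or> (Suc (ppos b i) = m \<and> b (ppos b i) \<noteq> 0)"
    using ppos_cover by blast
  have b1: "b k = 0 \<or> b k = 1" for k proof -
    have "b k \<le> 1" using assms unfolding bnd_def by auto
    then show ?thesis by presburger
  qed
  from i show "enc (parse b) m = b m"
  proof
    assume h: "ppos b i = m"
    then show ?thesis using est_parse[of b i] b1[of m] by (auto simp: enc_def parse_def)
  next
    assume h: "Suc (ppos b i) = m \<and> b (ppos b i) \<noteq> 0"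
    then show ?thesis using est_parse[of b i] b1[of m] by (auto simp: enc_def parse_def)
  qed
qed

lemma ppos_enc: "est c (ppos (enc c) i) = (i, 0)"
proof (induction i)
  case 0
  then show ?case by simp
next
  case (Suc i)
  then show ?case
    by (cases "c i = 0") (auto simp: enc_def numeral_2_eq_2)
qed

lemma parse_enc: assumes "bnd 2 c" shows "parse (enc c) = c"
proof
  fix i
  have c2: "c i = 0 \<or> c i = 1 \<or> c i = 2" proof -
    have "c i \<le> 2" using assms unfolding bnd_def by auto
    then show ?thesis by presburger
  qed
  have e: "est c (ppos (enc c) i) = (i, 0)" by (rule ppos_enc)
  then have e1: "c i \<noteq> 0 \<Longrightarrow> est c (Suc (ppos (enc c) i)) = (i, 1)" by simp
  show "parse (enc c) i = c i"
    using c2 e e1 by (auto simp: parse_def enc_def)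
qed

lemma ppos_le: "ppos b i \<le> 2 * i"
  by (induction i) auto

lemma ppos_agree:
  assumes "\<forall>k<2*N. b k = b' k" "i \<le> N" shows "ppos b i = ppos b' i"
  using assms(2)
proof (induction i)
  case 0
  then show ?case by simp
next
  case (Suc i)
  then have "ppos b i = ppos b' i" by simp
  moreover have "ppos b i < 2 * N" using ppos_le[of b i] Suc.prems by linarith
  ultimately show ?case using assms(1) by simp
qed

lemma parse_cont: "\<exists>K. \<forall>d d'. bnd 1 d \<longrightarrow> bnd 1 d' \<longrightarrow> (\<forall>k<K. d k = d' k) \<longrightarrow> (\<forall>k<N. parse d k = parse d' k)"
proof (intro exI[of _ "2*N"] allI impI)
  fix d d' :: "nat \<Rightarrow> nat" and k assume a: "\<forall>k<2*N. d k = d' k" and k: "k < N"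
  have p: "ppos d k = ppos d' k" using ppos_agree[OF a] k by simp
  have "ppos d k \<le> 2 * k" by (rule ppos_le)
  then have "ppos d k < 2*N" "Suc (ppos d k) < 2 * N" using k by linarith+
  then show "parse d k = parse d' k" using a p unfolding parse_def by simp
qed

lemma est_le: "fst (est c m) \<le> m"
  by (induction m) auto

lemma est_agree:
  assumes "\<forall>k<N. c k = c' k" "m \<le> N" shows "est c m = est c' m"
  using assms(2)
proof (induction m)
  case 0
  then show ?case by simp
next
  case (Suc m)
  then have "est c m = est c' m" by simp
  moreover have "fst (est c m) < N" using est_le[of c m] Suc.prems by linarith
  ultimately show ?case using assms(1) by simp
qed

lemma enc_cont: "\<exists>K. \<forall>d d'. bnd 2 d \<longrightarrow> bnd 2 d' \<longrightarrow> (\<forall>k<K. d k = d' k) \<longrightarrow> (\<forall>k<N. enc d k = enc d' k)"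
proof (intro exI[of _ N] allI impI)
  fix d d' :: "nat \<Rightarrow> nat" and k assume a: "\<forall>k<N. d k = d' k" and k: "k < N"
  have p: "est d k = est d' k" using est_agree[OF a] k by simp
  have "fst (est d k) < N" using est_le[of d k] k by linarith
  then show "enc d k = enc d' k" using a p unfolding enc_def by simp
qed

lemma id_cont: "\<exists>K. \<forall>d d'. bnd M d \<longrightarrow> bnd M d' \<longrightarrow> (\<forall>k<K. d k = d' k) \<longrightarrow> (\<forall>k<N. d k = d' k)"
  by blast



definition cw :: "nat \<Rightarrow> real" where "cw n = 2 / 3 ^ Suc n"
definition xs :: "nat \<Rightarrow> real" where "xs n = (1/4) ^ (n * n)"

lemma cw_tail: "tail cw m = 1 / 3 ^ m"
proof -
  have e: "cw (k + m) = (2 / 3 ^ Suc m) * (1/3) ^ k" for k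
    by (simp add: cw_def power_add field_simps)
  have "(\<lambda>k. (2 / 3 ^ Suc m) * (1/3::real) ^ k) sums ((2 / 3 ^ Suc m) * (1 / (1 - 1/3)))"
    by (intro sums_mult geometric_sums) simp
  then have "tail cw m = (2 / 3 ^ Suc m) * (1 / (1 - 1/3))"
    unfolding tail_def e by (simp add: sums_iff)
  then show ?thesis by (simp add: field_simps)
qed

lemma cw_sep: "sep cw 1"
  unfolding sep_def
proof (intro conjI allI)
  show "0 < cw n" for n by (simp add: cw_def)
  have "(\<lambda>k. 2 * (1/3::real) ^ Suc k) = cw" by (auto simp: cw_def field_simps)
  moreover have "summable (\<lambda>k. 2 * (1/3::real) ^ Suc k)"
    by (intro summable_mult summable_Suc_iff[THEN iffD2] summable_geometric) simp
  ultimately show "summable cw" by simp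
  show "real 1 * tail cw (Suc n) < cw n" for n
    by (simp add: cw_tail cw_def field_simps)
qed

lemma xs_pos: "xs n > 0" by (simp add: xs_def)

lemma xs_le: "xs (k + N) \<le> (1/4) ^ (N*N) * (1/4) ^ k"
proof -
  have "(k+N)*(k+N) = N*N + (k*k + 2*k*N)" by (simp add: algebra_simps)
  with le_square[of k] have "N * N + k \<le> (k + N) * (k + N)" by linarith
  then have "(1/4::real) ^ ((k + N) * (k + N)) \<le> (1/4) ^ (N * N + k)"
    by (intro power_decreasing) auto
  then show ?thesis by (simp add: xs_def power_add)
qed

lemma xs_summable: "summable xs"
proof (rule summable_comparison_test'[where g="\<lambda>k. (1/4::real) ^ k"])
  show "summable (\<lambda>k. (1/4::real) ^ k)" by (intro summable_geometric) simp
  fix n show "norm (xs n) \<le> (1/4) ^ n" using xs_le[of n 0] by (simp add: xs_def)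
qed

lemma xs_tail: "tail xs N \<le> 4/3 * (1/4) ^ (N*N)"
proof -
  have s: "summable (\<lambda>k. (1/4::real) ^ (N*N) * (1/4) ^ k)"
    by (intro summable_mult summable_geometric) simp
  have "tail xs N \<le> (\<Sum>k. (1/4::real) ^ (N*N) * (1/4) ^ k)"
    unfolding tail_def
    by (intro suminf_le xs_le s summable_ignore_initial_segment xs_summable)
  also have "\<dots> = (1/4) ^ (N*N) * (1 / (1 - 1/4))"
    by (subst suminf_mult) (auto simp: suminf_geometric)
  finally show ?thesis by simp
qed

lemma xs_sep2: "sep xs 2"
  unfolding sep_def
proof (intro conjI allI)
  show "0 < xs n" for n by (rule xs_pos)
  show "summable xs" by (rule xs_summable)
  fix n
  have "(1/4::real) ^ (Suc n * Suc n) = (1/4) ^ (n * n) * (1/4) ^ (2 * n + 1)"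
  proof -
    have "Suc n * Suc n = n * n + (2 * n + 1)" by simp
    then show ?thesis by (simp only: power_add)
  qed
  also have "\<dots> \<le> (1/4) ^ (n * n) * (1/4)"
  proof -
    have "(1/4::real)^(2*n) \<le> 1" by (rule power_le_one) auto
    then have "(1/4::real)^(2*n+1) \<le> 1/4" by simp
    then show ?thesis by (intro mult_left_mono) auto
  qed
  finally have "(1/4::real) ^ (Suc n * Suc n) \<le> (1/4) ^ (n * n) * (1/4)" .
  then have "real 2 * tail xs (Suc n) \<le> 2 * (4/3) * ((1/4) ^ (n * n) * (1/4))"
    using xs_tail[of "Suc n"] by linarith
  also have "\<dots> < xs n" by (simp add: xs_def)
  finally show "real 2 * tail xs (Suc n) < xs n" .
qed

lemma xs_sep1: "sep xs 1"
  unfolding sep_def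
proof (intro conjI allI)
  show "0 < xs n" for n by (rule xs_pos)
  show "summable xs" by (rule xs_summable)
  fix n
  have "0 \<le> tail xs (Suc n)" using tail_nonneg[of xs] xs_pos xs_summable by blast
  then have "real 1 * tail xs (Suc n) \<le> real 2 * tail xs (Suc n)" by simp
  also have "\<dots> < xs n" using xs_sep2 unfolding sep_def by blast
  finally show "real 1 * tail xs (Suc n) < xs n" .
qed

lemma DS_I: "bnd M d \<Longrightarrow> y = val w d \<Longrightarrow> y \<in> DS w M"
  unfolding DS_def by blast

lemma cantor_DS: "ternary_cantor_set = DS cw 1"
proof
  show "ternary_cantor_set \<subseteq> DS cw 1"
  proof
    fix y assume "y \<in> ternary_cantor_set"
    then obtain d where d: "\<forall>n. d n \<in> {0, 2}" "y = (\<Sum>n. real (d n) / 3 ^ (Suc n))"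
      unfolding ternary_cantor_set_def by auto
    have e: "(\<lambda>n. real (d n) / 3 ^ Suc n) = (\<lambda>n. real (d n div 2) * cw n)"
    proof
      fix n from d(1) have "d n = 0 \<or> d n = 2" by auto
      then show "real (d n) / 3 ^ Suc n = real (d n div 2) * cw n" by (auto simp: cw_def)
    qed
    have y2: "y = val cw (\<lambda>n. d n div 2)" unfolding val_def d(2) e by (rule refl)
    have b: "bnd 1 (\<lambda>n. d n div 2)" unfolding bnd_def
    proof
      fix n from d(1) have "d n = 0 \<or> d n = 2" by auto
      then show "d n div 2 \<le> 1" by auto
    qed
    show "y \<in> DS cw 1" by (rule DS_I[OF b y2])
  qed
  show "DS cw 1 \<subseteq> ternary_cantor_set"
  proof
    fix y assume "y \<in> DS cw 1"
    then obtain d where d: "bnd 1 d" "y = val cw d" unfolding DS_def by auto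
    have d1: "d n = 0 \<or> d n = 1" for n
    proof -
      have "d n \<le> 1" using d(1) unfolding bnd_def by auto
      then show ?thesis by presburger
    qed
    have e: "(\<lambda>n. real (d n) * cw n) = (\<lambda>n. real (2 * d n) / 3 ^ Suc n)"
      by (auto simp: cw_def)
    have y2: "y = (\<Sum>n. real (2 * d n) / 3 ^ (Suc n))" unfolding d(2) val_def e by (rule refl)
    have dd: "\<forall>n. 2 * d n \<in> {0, 2}" using d1 by auto
    have "\<exists>d'. (\<forall>n. d' n \<in> {0::nat, 2}) \<and> y = (\<Sum>n. real (d' n) / 3 ^ (Suc n))"
      by (rule exI[of _ "\<lambda>n. 2 * d n"]) (rule conjI[OF dd y2])
    then show "y \<in> ternary_cantor_set" unfolding ternary_cantor_set_def by (rule CollectI)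
  qed
qed

lemma ach_DS: "achievement_set xs = DS xs 1"
proof
  show "achievement_set xs \<subseteq> DS xs 1"
  proof
    fix y assume "y \<in> achievement_set xs"
    then obtain A where A: "y = (\<Sum>n. if n \<in> A then xs n else 0)"
      unfolding achievement_set_def by auto
    have e: "(\<lambda>n. if n \<in> A then xs n else 0) = (\<lambda>n. real (if n \<in> A then 1 else 0) * xs n)" by auto
    have y2: "y = val xs (\<lambda>n. if n \<in> A then 1 else 0)" unfolding A val_def e by (rule refl)
    have b: "bnd 1 (\<lambda>n. if n \<in> A then 1 else (0::nat))" unfolding bnd_def by auto
    show "y \<in> DS xs 1" by (rule DS_I[OF b y2])
  qed
  show "DS xs 1 \<subseteq> achievement_set xs"
  proof
    fix y assume "y \<in> DS xs 1"
    then obtain d where d: "bnd 1 d" "y = val xs d" unfolding DS_def by auto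
    have d1: "d n = 0 \<or> d n = 1" for n
    proof -
      have "d n \<le> 1" using d(1) unfolding bnd_def by auto
      then show ?thesis by presburger
    qed
    have e: "(\<lambda>n. real (d n) * xs n) = (\<lambda>n. if n \<in> {k. d k = 1} then xs n else 0)"
    proof
      fix n show "real (d n) * xs n = (if n \<in> {k. d k = 1} then xs n else 0)"
      using d1[of n] by auto
    qed
    have "y = (\<Sum>n. if n \<in> {k. d k = 1} then xs n else 0)" unfolding d(2) val_def e by (rule refl)
    then have "\<exists>A. y = (\<Sum>n. if n \<in> A then xs n else 0)" by (rule exI)
    then show "y \<in> achievement_set xs" unfolding achievement_set_def by (rule CollectI)
  qed
qed

lemma val_add:
  assumes "sep w M" "bnd M d" "bnd M d'"
  shows "val w d + val w d' = val w (\<lambda>n. d n + d' n)"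
proof -
  have wp: "\<forall>n. w n > 0" "summable w" using assms(1) unfolding sep_def by auto
  show ?thesis
    unfolding val_def
    using suminf_add[OF summable_digits[OF wp assms(2)] summable_digits[OF wp assms(3)]]
    by (simp add: distrib_right)
qed

lemma sum_DS: "set_sum (DS xs 1) (DS xs 1) = DS xs 2"
proof
  show "set_sum (DS xs 1) (DS xs 1) \<subseteq> DS xs 2"
  proof
    fix y assume "y \<in> set_sum (DS xs 1) (DS xs 1)"
    then obtain d d' where d: "bnd 1 d" "bnd 1 d'" "y = val xs d + val xs d'"
      unfolding set_sum_def DS_def by auto
    then have y2: "y = val xs (\<lambda>n. d n + d' n)" using val_add[OF xs_sep1] by simp
    have b: "bnd 2 (\<lambda>n. d n + d' n)" unfolding bnd_def
    proof
      fix n have "d n \<le> 1" "d' n \<le> 1" using d(1,2) unfolding bnd_def by auto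
      then show "d n + d' n \<le> 2" by simp
    qed
    show "y \<in> DS xs 2" by (rule DS_I[OF b y2])
  qed
  show "DS xs 2 \<subseteq> set_sum (DS xs 1) (DS xs 1)"
  proof
    fix y assume "y \<in> DS xs 2"
    then obtain c where c: "bnd 2 c" "y = val xs c" unfolding DS_def by auto
    define d where "d = (\<lambda>n. if 1 \<le> c n then 1 else 0::nat)"
    define d' where "d' = (\<lambda>n. if c n = 2 then 1 else 0::nat)"
    have b: "bnd 1 d" "bnd 1 d'" unfolding bnd_def d_def d'_def by auto
    have "c = (\<lambda>n. d n + d' n)"
    proof
      fix n
      have "c n \<le> 2" using c(1) unfolding bnd_def by auto
      then show "c n = d n + d' n" unfolding d_def d'_def by presburger
    qed
    then have y: "y = val xs d + val xs d'" using c(2) val_add[OF xs_sep1 b] by simp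
    have "val xs d \<in> DS xs 1" "val xs d' \<in> DS xs 1" using b unfolding DS_def by auto
    then show "y \<in> set_sum (DS xs 1) (DS xs 1)"
      unfolding set_sum_def y by blast
  qed
qed

lemma E_cantor: "is_cantor_set (achievement_set xs)"
proof -
  have "DS cw 1 homeomorphic DS xs 1"
    by (rule DS_homeomorphic[OF cw_sep xs_sep1, of id id]) (auto intro: id_cont)
  then show ?thesis unfolding is_cantor_set_def ach_DS cantor_DS
    by (rule homeomorphic_sym[THEN iffD1])
qed

lemma EE_cantor: "is_cantor_set (set_sum (achievement_set xs) (achievement_set xs))"
proof -
  have "DS cw 1 homeomorphic DS xs 2"
    by (rule DS_homeomorphic[OF cw_sep xs_sep2, of parse enc])
       (rule parse_bnd, rule enc_bnd, erule enc_parse, erule parse_enc, rule parse_cont, rule enc_cont)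
  then show ?thesis unfolding is_cantor_set_def ach_DS cantor_DS sum_DS
    by (rule homeomorphic_sym[THEN iffD1])
qed



lemma lim1: "s > (0::real) \<Longrightarrow> (\<lambda>N::nat. 2^N * (4/3 * (1/4::real)^(N*N)) powr s) \<longlonglongrightarrow> 0"
  by real_asymp
lemma lim2: "(\<lambda>N::nat. 4/3 * (1/4::real)^(N*N)) \<longlonglongrightarrow> 0"
  by real_asymp

lemma val_zero: "val w (\<lambda>_. 0) = 0" unfolding val_def by simp

lemma DS_bounded: assumes "sep w M" shows "bounded (DS w M)"
  unfolding bounded_iff
proof (intro exI ballI)
  fix y assume "y \<in> DS w M"
  then obtain d where d: "bnd M d" "y = val w d" unfolding DS_def by auto
  have wp: "\<forall>n. w n > 0" "summable w" using assms unfolding sep_def by auto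
  have z: "bnd M (\<lambda>_. 0)" unfolding bnd_def by simp
  show "norm y \<le> real M * tail w 0"
    using agree_bound[OF wp d(1) z, of 0] d(2) by (simp add: val_zero)
qed

lemma hpre:
  assumes s: "s > 0" and \<delta>: "\<delta> > 0"
  shows "hausdorff_pre s \<delta> (DS xs 1) = 0"
proof -
  have "hausdorff_pre s \<delta> (DS xs 1) \<le> 0 + ennreal e" if e: "e > 0" for e
  proof -
    define r where "r N = 4/3 * (1/4::real)^(N*N)" for N
    have "eventually (\<lambda>N. r N < \<delta>) sequentially"
      using order_tendstoD(2)[OF lim2 \<delta>] unfolding r_def .
    moreover have "eventually (\<lambda>N. 2^N * r N powr s < e) sequentially"
      using order_tendstoD(2)[OF lim1[OF s] e] unfolding r_def .
    ultimately have "eventually (\<lambda>N. r N < \<delta> \<and> 2^N * r N powr s < e) sequentially"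
      by (rule eventually_conj)
    then obtain N where N: "r N < \<delta>" "2^N * r N powr s < e"
      unfolding eventually_sequentially by auto
    define U where "U i = val xs ` {d. bnd 1 d \<and> {k. k < N \<and> d k = 1} = set_decode i}" for i
    define F where "F = set_encode ` Pow {..<N}"
    have rpos: "0 \<le> r N" unfolding r_def by simp
    have cover: "DS xs 1 \<subseteq> (\<Union>i. U i)"
    proof
      fix y assume "y \<in> DS xs 1"
      then obtain d where d: "bnd 1 d" "y = val xs d" unfolding DS_def by auto
      have fin: "finite {k. k < N \<and> d k = 1}" by simp
      have "d \<in> {d'. bnd 1 d' \<and> {k. k < N \<and> d' k = 1} = set_decode (set_encode {k. k < N \<and> d k = 1})}"
        using d(1) set_encode_inverse[OF fin] by simp
      then have "y \<in> U (set_encode {k. k < N \<and> d k = 1})"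
        unfolding U_def d(2) by (rule imageI)
      then show "y \<in> (\<Union>i. U i)" by blast
    qed
    have sub: "U i \<subseteq> DS xs 1" for i unfolding U_def using DS_I by auto
    have diam: "diameter (U i) \<le> r N" for i
    proof (rule diameter_le)
      show "U i \<noteq> {} \<or> 0 \<le> r N" using rpos by simp
      fix a b assume "a \<in> U i" "b \<in> U i"
      then obtain d d' where d: "bnd 1 d" "{k. k < N \<and> d k = 1} = set_decode i" "a = val xs d"
        and d': "bnd 1 d'" "{k. k < N \<and> d' k = 1} = set_decode i" "b = val xs d'"
        unfolding U_def by auto
      have ag: "\<forall>k<N. d k = d' k"
      proof (intro allI impI)
        fix k assume k: "k < N"
        have "d k \<le> 1" "d' k \<le> 1" using d(1) d'(1) unfolding bnd_def by auto
        moreover have "d k = 1 \<longleftrightarrow> d' k = 1"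
        proof -
          have "{k. k < N \<and> d k = 1} = {k. k < N \<and> d' k = 1}" using d(2) d'(2) by simp
          then have "k \<in> {k. k < N \<and> d k = 1} \<longleftrightarrow> k \<in> {k. k < N \<and> d' k = 1}" by (simp only:)
          then show ?thesis using k by simp
        qed
        ultimately show "d k = d' k" by linarith
      qed
      have "\<bar>a - b\<bar> \<le> real 1 * tail xs N"
        unfolding d(3) d'(3) using xs_pos xs_summable d(1) d'(1) ag by (intro agree_bound) auto
      also have "\<dots> \<le> r N" using xs_tail[of N] unfolding r_def by simp
      finally show "norm (a - b) \<le> r N" by simp
    qed
    have dpos: "0 \<le> diameter (U i)" for i
      by (rule diameter_ge_0[OF bounded_subset[OF DS_bounded[OF xs_sep1] sub]])
    have zero: "U i = {}" if "i \<notin> F" for i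
    proof (rule ccontr)
      assume "U i \<noteq> {}"
      then obtain y where "y \<in> U i" by blast
      then obtain d where "d \<in> {d. bnd 1 d \<and> {k. k < N \<and> d k = 1} = set_decode i}"
        unfolding U_def by (rule imageE)
      then have "{k. k < N \<and> d k = 1} = set_decode i" by simp
      then have "set_decode i \<in> Pow {..<N}" by auto
      then have "set_encode (set_decode i) \<in> F" unfolding F_def by (rule imageI)
      then show False using that by simp
    qed
    have finF: "finite F" unfolding F_def by simp
    have cardF: "card F \<le> 2 ^ N"
    proof -
      have "card F \<le> card (Pow {..<N})" unfolding F_def by (rule card_image_le) simp
      also have "\<dots> = 2 ^ N" by (simp add: card_Pow)
      finally show ?thesis .
    qed
    have "(\<Sum>i. ennreal (diameter (U i) powr s)) = (\<Sum>i\<in>F. ennreal (diameter (U i) powr s))"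
      by (rule suminf_finite[OF finF]) (simp add: zero)
    also have "\<dots> \<le> of_nat (card F) * ennreal (r N powr s)"
    proof (rule sum_bounded_above)
      fix i assume "i \<in> F"
      show "ennreal (diameter (U i) powr s) \<le> ennreal (r N powr s)"
        using powr_mono2[OF less_imp_le[OF s] dpos diam] by (rule ennreal_leI)
    qed
    also have "\<dots> \<le> of_nat (2 ^ N) * ennreal (r N powr s)"
    proof (rule mult_right_mono)
      show "(of_nat (card F)::ennreal) \<le> of_nat (2 ^ N)"
        unfolding ennreal_of_nat_eq_real_of_nat using cardF by (intro ennreal_leI) simp
    qed simp
    also have "\<dots> = ennreal (real (2 ^ N)) * ennreal (r N powr s)"
      by (simp only: ennreal_of_nat_eq_real_of_nat)
    also have "\<dots> = ennreal (real (2 ^ N) * r N powr s)"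
      by (rule ennreal_mult[symmetric]) simp_all
    also have "\<dots> = ennreal (2 ^ N * r N powr s)" by simp
    also have "\<dots> \<le> ennreal e" using N(2) by (intro ennreal_leI) simp
    finally have sumle: "(\<Sum>i. ennreal (diameter (U i) powr s)) \<le> ennreal e" .
    have mem: "U \<in> {U :: nat \<Rightarrow> real set. DS xs 1 \<subseteq> (\<Union>i. U i) \<and> (\<forall>i. diameter (U i) \<le> \<delta>)}"
    proof -
      have "\<forall>i. diameter (U i) \<le> \<delta>" using diam N(1) by (meson less_imp_le order_trans)
      then show ?thesis using cover by simp
    qed
    have "hausdorff_pre s \<delta> (DS xs 1) \<le> (\<Sum>i. ennreal (diameter (U i) powr s))"
      unfolding hausdorff_pre_def by (rule INF_lower[OF mem])
    then show ?thesis using sumle by simp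
  qed
  then have "hausdorff_pre s \<delta> (DS xs 1) \<le> 0" by (rule ennreal_le_epsilon)
  then show ?thesis by simp
qed

lemma hmeas: "s > 0 \<Longrightarrow> hausdorff_measure s (DS xs 1) = 0"
proof -
  assume s: "s > 0"
  have "hausdorff_measure s (DS xs 1) = (SUP \<delta>\<in>{0::real<..}. (0::ennreal))"
    unfolding hausdorff_measure_def by (rule SUP_cong[OF refl]) (rule hpre[OF s], simp)
  also have "\<dots> = 0" by simp
  finally show ?thesis .
qed

lemma hdim: "hausdorff_dim (DS xs 1) = 0"
  unfolding hausdorff_dim_def
proof (rule antisym)
  show "(INF s\<in>{s. 0 \<le> s \<and> hausdorff_measure s (DS xs 1) = 0}. ereal s) \<le> 0"
  proof (rule ereal_le_epsilon2)
    fix e :: real assume e: "0 < e"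
    have "e \<in> {s. 0 \<le> s \<and> hausdorff_measure s (DS xs 1) = 0}" using e hmeas[OF e] by simp
    then have "(INF s\<in>{s. 0 \<le> s \<and> hausdorff_measure s (DS xs 1) = 0}. ereal s) \<le> ereal e"
      by (rule INF_lower)
    then show "(INF s\<in>{s. 0 \<le> s \<and> hausdorff_measure s (DS xs 1) = 0}. ereal s) \<le> 0 + ereal e" by simp
  qed
  show "0 \<le> (INF s\<in>{s. 0 \<le> s \<and> hausdorff_measure s (DS xs 1) = 0}. ereal s)"
    by (rule INF_greatest) simp
qed

theorem mainTheorem2:
  shows "\<exists>x :: nat \<Rightarrow> real. (\<forall>n. x n > 0) \<and> summable x \<and>
           is_cantor_set (achievement_set x) \<and>
           hausdorff_dim (achievement_set x) = 0 \<and>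
           is_cantor_set (set_sum (achievement_set x) (achievement_set x))"
proof (intro exI[of _ xs] conjI allI)
  show "0 < xs n" for n by (rule xs_pos)
  show "summable xs" by (rule xs_summable)
  show "is_cantor_set (achievement_set xs)" by (rule E_cantor)
  show "hausdorff_dim (achievement_set xs) = 0" unfolding ach_DS by (rule hdim)
  show "is_cantor_set (set_sum (achievement_set xs) (achievement_set xs))" by (rule EE_cantor)
qed

end
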